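(* Let $(V,\varphi,\xi,\eta,g)$ be as in the context and let $\mathcal{F}$ be the space of tensors defined there. The operators $p_1,p_2,p_3,p_4:\mathcal{F}\to\mathcal{F}$ satisfy: (i) $p_i\circ p_i=p_i$ for $i=1,2,3,4$; (ii) $p_1+p_2+p_3+p_4=\mathrm{id}$; (iii) $p_i\circ p_j=0$ for $i\neq j$. Moreover each $p_i$ commutes with the action of the group $G$, i.e. $p_i(\lambda(a)F)=\lambda(a)(p_iF)$ for all $a\in G$, $F\in\mathcal{F}$.
   Context: Let $V$ be a real vector space of dimension $2n+1$ with an endomorphism $\varphi$, a vector $\xi$ and a linear form $\eta$ such that $\varphi\xi=0$, $\eta\circ\varphi=0$, $\eta(\xi)=1$, $\varphi^2=\mathrm{id}-\eta\otimes\xi$, and such that $\varphi$ restricted to $\mathbb{D}=\ker\eta$ has eigenvalues $\pm1$ with eigenspaces of equal dimension $n$. Let $g$ be a nondegenerate symmetric bilinear form (pseudo-Euclidean metric) on $V$ with $g(\varphi X,\varphi Y)=-g(X,Y)+\eta(X)\eta(Y)$; then $\eta(X)=g(X,\xi)$. Write $hX=X-\eta(X)\xi\in\mathbb{D}$. Fix a basis $\{e_1,\dots,e_{2n}\}$ of $\mathbb{D}$ and write $Y=Y^ie_i+\eta(Y)\xi$ (summation over $i=1,\dots,2n$). Let $\mathcal{F}$ be the vector space of all $(0,3)$-tensors $F$ on $V$ of the form $F(X,Y,Z)=Y^ig(\mathcal{A}_{e_i}X,Z)+\eta(Y)g(\mathcal{A}_\xi X,\varphi Z)$, where $\mathcal{A}_{e_i}:V\to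 V$ ($i=1,\dots,2n$) and $\mathcal{A}_\xi:V\to\mathbb{D}$ are linear maps satisfying, for all $X\in V$ and all $i,j$: $g(\mathcal{A}_{e_i}X,e_j)=-g(\mathcal{A}_{e_j}X,e_i)$; $\mathcal{A}_{\varphi e_i}X=-\varphi(\mathcal{A}_{e_i}X)-g(\mathcal{A}_\xi X,e_i)\xi$ (with $\mathcal{A}_{\varphi e_i}$ defined by linearity in the index); $\eta(\mathcal{A}_{e_i}X)=-g(\mathcal{A}_\xi X,\varphi e_i)$; $\eta(\mathcal{A}_\xi X)=0$. Let $G$ be the group of linear automorphisms $a$ of $V$ with $a\varphi=\varphi a$, $a\xi=\xi$, $\eta\circ a=\eta$, $g(aX,aY)=g(X,Y)$ (the structure group $\mathbb{U}(n,\mathbb{R})\times\mathrm{Id}$), acting on $\mathcal{F}$ by $(\lambda(a)F)(X,Y,Z)=F(a^{-1}X,a^{-1}Y,a^{-1}Z)$. Define $p_1(F)(X,Y,Z)=F(hX,hY,hZ)$; $p_2(F)(X,Y,Z)=-\eta(Y)F(hX,hZ,\xi)+\eta(Z)F(hX,hY,\xi)$; $p_3(F)(X,Y,Z)=\eta(X)F(\xi,hY,hZ)$; $p_4(F)(X,Y,Z)=\eta(X)\eta(Y)F(\xi,\xi,hZ)-\eta(X)\eta(Z)F(\xi,\xi,hY)$. *)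

theory Defs
  imports "HOL-Analysis.Analysis"
begin

type_synonym 'v tensor3 = "'v \<Rightarrow> 'v \<Rightarrow> 'v \<Rightarrow> real"

definition distD :: "('v \<Rightarrow> real) \<Rightarrow> 'v set" where
  "distD \<eta> = {X. \<eta> X = 0}"

definition hproj :: "('v \<Rightarrow> real) \<Rightarrow> 'v::real_vector \<Rightarrow> 'v \<Rightarrow> 'v" where
  "hproj \<eta> \<xi> X = X - \<eta> X *\<^sub>R \<xi>"

definition apn_structure ::
  "nat \<Rightarrow> ('v::euclidean_space \<Rightarrow> 'v) \<Rightarrow> 'v \<Rightarrow> ('v \<Rightarrow> real) \<Rightarrow> ('v \<Rightarrow> 'v \<Rightarrow> real) \<Rightarrow> bool" where
  "apn_structure n \<phi> \<xi> \<eta> g \<longleftrightarrow>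
     DIM('v) = 2 * n + 1 \<and>
     linear \<phi> \<and> linear \<eta> \<and>
     \<phi> \<xi> = 0 \<and> (\<forall>X. \<eta> (\<phi> X) = 0) \<and> \<eta> \<xi> = 1 \<and>
     (\<forall>X. \<phi> (\<phi> X) = X - \<eta> X *\<^sub>R \<xi>) \<and>
     dim {X. \<eta> X = 0 \<and> \<phi> X = X} = n \<and>
     dim {X. \<eta> X = 0 \<and> \<phi> X = - X} = n \<and>
     (\<forall>X. linear (g X)) \<and> (\<forall>X Y. g X Y = g Y X) \<and>
     (\<forall>X. (\<forall>Y. g X Y = 0) \<longrightarrow> X = 0) \<and>
     (\<forall>X Y. g (\<phi> X) (\<phi> Y) = - g X Y + \<eta> X * \<eta> Y)"

text \<open>The family A_{e_i} (i = 1..2n) indexed by a basis of D and extended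
  linearly in the index is represented by a map A u X, linear in X and in the index u;
  the basis conditions are then equivalently required for all u, w in D.\<close>
definition Fspace ::
  "('v::euclidean_space \<Rightarrow> 'v) \<Rightarrow> 'v \<Rightarrow> ('v \<Rightarrow> real) \<Rightarrow> ('v \<Rightarrow> 'v \<Rightarrow> real) \<Rightarrow> 'v tensor3 set" where
  "Fspace \<phi> \<xi> \<eta> g = {F. \<exists>(A :: 'v \<Rightarrow> 'v \<Rightarrow> 'v) (A\<xi> :: 'v \<Rightarrow> 'v).
      (\<forall>u. linear (A u)) \<and> (\<forall>X. linear (\<lambda>u. A u X)) \<and> linear A\<xi> \<and>
      (\<forall>X. \<forall>u\<in>distD \<eta>. \<forall>w\<in>distD \<eta>. g (A u X) w = - g (A w X) u) \<and>
      (\<forall>X. \<forall>u\<in>distD \<eta>. A (\<phi> u) X = - \<phi> (A u X) - g (A\<xi> X) u *\<^sub>R \<xi>) \<and>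
      (\<forall>X. \<forall>u\<in>distD \<eta>. \<eta> (A u X) = - g (A\<xi> X) (\<phi> u)) \<and>
      (\<forall>X. \<eta> (A\<xi> X) = 0) \<and>
      F = (\<lambda>X Y Z. g (A (hproj \<eta> \<xi> Y) X) Z + \<eta> Y * g (A\<xi> X) (\<phi> Z))}"

definition struct_group ::
  "('v::real_vector \<Rightarrow> 'v) \<Rightarrow> 'v \<Rightarrow> ('v \<Rightarrow> real) \<Rightarrow> ('v \<Rightarrow> 'v \<Rightarrow> real) \<Rightarrow> ('v \<Rightarrow> 'v) set" where
  "struct_group \<phi> \<xi> \<eta> g = {a. linear a \<and> bij a \<and> a \<circ> \<phi> = \<phi> \<circ> a \<and> a \<xi> = \<xi> \<and>
      \<eta> \<circ> a = \<eta> \<and> (\<forall>X Y. g (a X) (a Y) = g X Y)}"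

definition lam :: "('v \<Rightarrow> 'v) \<Rightarrow> 'v tensor3 \<Rightarrow> 'v tensor3" where
  "lam a F = (\<lambda>X Y Z. F (inv a X) (inv a Y) (inv a Z))"

definition p1 :: "('v \<Rightarrow> real) \<Rightarrow> 'v::real_vector \<Rightarrow> 'v tensor3 \<Rightarrow> 'v tensor3" where
  "p1 \<eta> \<xi> F = (\<lambda>X Y Z. F (hproj \<eta> \<xi> X) (hproj \<eta> \<xi> Y) (hproj \<eta> \<xi> Z))"

definition p2 :: "('v \<Rightarrow> real) \<Rightarrow> 'v::real_vector \<Rightarrow> 'v tensor3 \<Rightarrow> 'v tensor3" where
  "p2 \<eta> \<xi> F = (\<lambda>X Y Z. - \<eta> Y * F (hproj \<eta> \<xi> X) (hproj \<eta> \<xi> Z) \<xi>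
                        + \<eta> Z * F (hproj \<eta> \<xi> X) (hproj \<eta> \<xi> Y) \<xi>)"

definition p3 :: "('v \<Rightarrow> real) \<Rightarrow> 'v::real_vector \<Rightarrow> 'v tensor3 \<Rightarrow> 'v tensor3" where
  "p3 \<eta> \<xi> F = (\<lambda>X Y Z. \<eta> X * F \<xi> (hproj \<eta> \<xi> Y) (hproj \<eta> \<xi> Z))"

definition p4 :: "('v \<Rightarrow> real) \<Rightarrow> 'v::real_vector \<Rightarrow> 'v tensor3 \<Rightarrow> 'v tensor3" where
  "p4 \<eta> \<xi> F = (\<lambda>X Y Z. \<eta> X * \<eta> Y * F \<xi> \<xi> (hproj \<eta> \<xi> Z)
                        - \<eta> X * \<eta> Z * F \<xi> \<xi> (hproj \<eta> \<xi> Y))"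

definition projs :: "('v \<Rightarrow> real) \<Rightarrow> 'v::real_vector \<Rightarrow> nat \<Rightarrow> 'v tensor3 \<Rightarrow> 'v tensor3" where
  "projs \<eta> \<xi> i = (if i = 1 then p1 \<eta> \<xi> else if i = 2 then p2 \<eta> \<xi>
                   else if i = 3 then p3 \<eta> \<xi> else p4 \<eta> \<xi>)"

end

theory Submission imports Defs begin

locale apn =
  fixes n :: nat and \<phi> :: "'v::euclidean_space \<Rightarrow> 'v" and \<xi> :: 'v
    and \<eta> :: "'v \<Rightarrow> real" and g :: "'v \<Rightarrow> 'v \<Rightarrow> real"
  assumes S: "apn_structure n \<phi> \<xi> \<eta> g"
begin

lemma linphi: "linear \<phi>" and lineta: "linear \<eta>" and phixi: "\<phi> \<xi> = 0"
  and etaphi: "\<eta> (\<phi> X) = 0" and etaxi: "\<eta> \<xi> = 1"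
  and phiphi: "\<phi> (\<phi> X) = X - \<eta> X *\<^sub>R \<xi>" and ling: "linear (g X)"
  and gsym: "g X Y = g Y X" and gphi: "g (\<phi> X) (\<phi> Y) = - g X Y + \<eta> X * \<eta> Y"
  using S unfolding apn_structure_def by auto

lemma g_add2[simp]: "g X (Y + Z) = g X Y + g X Z" using ling linear_add by blast
lemma g_diff2[simp]: "g X (Y - Z) = g X Y - g X Z" using ling linear_diff by blast
lemma g_scale2[simp]: "g X (c *\<^sub>R Y) = c * g X Y" using ling linear_cmul by fastforce
lemma g_zero2[simp]: "g X 0 = 0" using ling linear_0 by blast
lemma g_neg2[simp]: "g X (- Y) = - g X Y" using g_diff2[of X 0 Y] by simp
lemma g_add1[simp]: "g (Y + Z) X = g Y X + g Z X" by (metis gsym g_add2)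
lemma g_diff1[simp]: "g (Y - Z) X = g Y X - g Z X" by (metis gsym g_diff2)
lemma g_scale1[simp]: "g (c *\<^sub>R Y) X = c * g Y X" by (metis gsym g_scale2)
lemma g_zero1[simp]: "g 0 X = 0" by (metis gsym g_zero2)
lemma g_neg1[simp]: "g (- Y) X = - g Y X" by (metis gsym g_neg2)

lemma eta_add[simp]: "\<eta> (X + Y) = \<eta> X + \<eta> Y" using lineta linear_add by blast
lemma eta_diff[simp]: "\<eta> (X - Y) = \<eta> X - \<eta> Y" using lineta linear_diff by blast
lemma eta_scale[simp]: "\<eta> (c *\<^sub>R X) = c * \<eta> X" using lineta linear_cmul by fastforce
lemma eta_zero[simp]: "\<eta> 0 = 0" using lineta linear_0 by blast
lemma eta_neg[simp]: "\<eta> (- X) = - \<eta> X" using eta_diff[of 0 X] by simp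
lemma phi_neg[simp]: "\<phi> (- X) = - \<phi> X" using linphi linear_diff[of \<phi> 0 X] linear_0[of \<phi>] by simp
lemma phi_add[simp]: "\<phi> (X + Y) = \<phi> X + \<phi> Y" using linphi linear_add by blast
lemma phi_diff[simp]: "\<phi> (X - Y) = \<phi> X - \<phi> Y" using linphi linear_diff by blast
lemma phi_scale[simp]: "\<phi> (c *\<^sub>R X) = c *\<^sub>R \<phi> X" using linphi linear_cmul by fastforce
lemma phi_zero[simp]: "\<phi> 0 = 0" using linphi linear_0 by blast
declare phixi[simp] etaphi[simp] etaxi[simp] phiphi[simp]

lemma gxi[simp]: "g X \<xi> = \<eta> X"
  using gphi[of X \<xi>] by simp
lemma gxi1[simp]: "g \<xi> X = \<eta> X" using gxi gsym by metis

abbreviation h where "h \<equiv> hproj \<eta> \<xi>"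
lemma h_eq: "h X = X - \<eta> X *\<^sub>R \<xi>" by (simp add: hproj_def)
lemma eta_h[simp]: "\<eta> (h X) = 0" by (simp add: h_eq)
lemma h_h[simp]: "h (h X) = h X" by (simp add: h_eq)
lemma h_xi[simp]: "h \<xi> = 0" by (simp add: h_eq)
lemma h_zero[simp]: "h 0 = 0" by (simp add: h_eq)
lemma phi_h[simp]: "\<phi> (h X) = \<phi> X" by (simp add: h_eq)
lemma lin_h: "linear h" by (rule linearI) (auto simp: h_eq algebra_simps)
lemma h_add[simp]: "h (X + Y) = h X + h Y" by (simp add: h_eq algebra_simps)
lemma h_scale[simp]: "h (c *\<^sub>R X) = c *\<^sub>R h X" by (simp add: h_eq algebra_simps)
lemma g_h2: "g X (h Z) = g X Z - \<eta> Z * \<eta> X" by (simp add: h_eq)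
lemma h_decomp: "X = h X + \<eta> X *\<^sub>R \<xi>" by (simp add: h_eq)
lemma h_in_D: "h X \<in> distD \<eta>" by (simp add: distD_def)


definition wit :: "('v \<Rightarrow> 'v \<Rightarrow> 'v) \<Rightarrow> ('v \<Rightarrow> 'v) \<Rightarrow> bool" where
  "wit A A\<xi> \<longleftrightarrow> (\<forall>u. linear (A u)) \<and> (\<forall>X. linear (\<lambda>u. A u X)) \<and> linear A\<xi> \<and>
      (\<forall>X. \<forall>u\<in>distD \<eta>. \<forall>w\<in>distD \<eta>. g (A u X) w = - g (A w X) u) \<and>
      (\<forall>X. \<forall>u\<in>distD \<eta>. A (\<phi> u) X = - \<phi> (A u X) - g (A\<xi> X) u *\<^sub>R \<xi>) \<and>
      (\<forall>X. \<forall>u\<in>distD \<eta>. \<eta> (A u X) = - g (A\<xi> X) (\<phi> u)) \<and>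
      (\<forall>X. \<eta> (A\<xi> X) = 0)"

definition FF :: "('v \<Rightarrow> 'v \<Rightarrow> 'v) \<Rightarrow> ('v \<Rightarrow> 'v) \<Rightarrow> 'v tensor3" where "FF A A\<xi> = (\<lambda>X Y Z. g (A (h Y) X) Z + \<eta> Y * g (A\<xi> X) (\<phi> Z))"

lemma Fspace_iff: "F \<in> Fspace \<phi> \<xi> \<eta> g \<longleftrightarrow> (\<exists>A A\<xi>. wit A A\<xi> \<and> F = FF A A\<xi>)"
  unfolding Fspace_def wit_def FF_def by blast

context
  fixes A A\<xi> assumes W: "wit A A\<xi>"
begin
lemma A_add[simp]: "A u (X + Y) = A u X + A u Y" using W linear_add unfolding wit_def by blast
lemma A_scale[simp]: "A u (c *\<^sub>R Y) = c *\<^sub>R A u Y" using W linear_cmul unfolding wit_def by blast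
lemma A_zero[simp]: "A u 0 = 0" using W linear_0 unfolding wit_def by blast
lemma A_add'[simp]: "A (u + v) X = A u X + A v X"
proof - have "linear (\<lambda>u. A u X)" using W unfolding wit_def by blast
  from linear_add[OF this] show ?thesis by simp qed
lemma A_scale'[simp]: "A (c *\<^sub>R u) X = c *\<^sub>R A u X"
proof - have "linear (\<lambda>u. A u X)" using W unfolding wit_def by blast
  from linear_cmul[OF this] show ?thesis by simp qed
lemma A_zero'[simp]: "A 0 X = 0"
proof - have "linear (\<lambda>u. A u X)" using W unfolding wit_def by blast
  from linear_0[OF this] show ?thesis by simp qed
lemma Ax_add[simp]: "A\<xi> (X + Y) = A\<xi> X + A\<xi> Y" using W linear_add unfolding wit_def by blast
lemma Ax_scale[simp]: "A\<xi> (c *\<^sub>R Y) = c *\<^sub>R A\<xi> Y" using W linear_cmul unfolding wit_def by blast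
lemma Ax_zero[simp]: "A\<xi> 0 = 0" using W linear_0 unfolding wit_def by blast
lemma Wskew: "u \<in> distD \<eta> \<Longrightarrow> w \<in> distD \<eta> \<Longrightarrow> g (A u X) w = - g (A w X) u"
  using W unfolding wit_def by blast
lemma Wphi: "u \<in> distD \<eta> \<Longrightarrow> A (\<phi> u) X = - \<phi> (A u X) - g (A\<xi> X) u *\<^sub>R \<xi>"
  using W unfolding wit_def by blast
lemma Weta: "u \<in> distD \<eta> \<Longrightarrow> \<eta> (A u X) = - g (A\<xi> X) (\<phi> u)"
  using W unfolding wit_def by blast
lemma Wx[simp]: "\<eta> (A\<xi> X) = 0"
  using W unfolding wit_def by blast
lemma A_eta: "\<eta> (A (h u) X) = - g (A\<xi> X) (\<phi> u)"
  using W h_in_D[of u] unfolding wit_def by (metis phi_h)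

lemma FX: "FF A A\<xi> X Y Z = FF A A\<xi> (h X) Y Z + \<eta> X * FF A A\<xi> \<xi> Y Z"
  by (subst h_decomp[of X]) (simp add: FF_def algebra_simps)
lemma FY: "FF A A\<xi> X Y Z = FF A A\<xi> X (h Y) Z + \<eta> Y * FF A A\<xi> X \<xi> Z"
  by (simp add: FF_def)
lemma FZ: "FF A A\<xi> X Y Z = FF A A\<xi> X Y (h Z) + \<eta> Z * FF A A\<xi> X Y \<xi>"
  by (simp add: FF_def g_h2 algebra_simps)
lemma Fxixi: "FF A A\<xi> X \<xi> \<xi> = 0" by (simp add: FF_def)
lemma Fskew: "FF A A\<xi> X \<xi> (h Z) = - FF A A\<xi> X (h Z) \<xi>"
  by (simp add: FF_def A_eta)
lemma F0: "FF A A\<xi> 0 Y Z = 0" "FF A A\<xi> X 0 Z = 0" "FF A A\<xi> X Y 0 = 0"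
  by (simp_all add: FF_def)
lemma Fscale1: "FF A A\<xi> (c *\<^sub>R X) Y Z = c * FF A A\<xi> X Y Z"
  by (simp add: FF_def algebra_simps)

lemma sumF: "(\<lambda>X Y Z. p1 \<eta> \<xi> (FF A A\<xi>) X Y Z + p2 \<eta> \<xi> (FF A A\<xi>) X Y Z + p3 \<eta> \<xi> (FF A A\<xi>) X Y Z
          + p4 \<eta> \<xi> (FF A A\<xi>) X Y Z) = FF A A\<xi>"
proof (intro ext)
  fix X Y Z
  let ?F = "FF A A\<xi>"
  have 1: "?F X Y Z = ?F (h X) Y Z + \<eta> X * ?F \<xi> Y Z" by (rule FX)
  have 2: "?F (h X) Y Z = ?F (h X) (h Y) Z + \<eta> Y * ?F (h X) \<xi> Z" by (rule FY)
  have 3: "?F (h X) (h Y) Z = ?F (h X) (h Y) (h Z) + \<eta> Z * ?F (h X) (h Y) \<xi>" by (rule FZ)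
  have 4: "?F (h X) \<xi> Z = - ?F (h X) (h Z) \<xi>"
    using FZ[of "h X" \<xi> Z] Fskew[of "h X" Z] Fxixi[of "h X"] by simp
  have 5: "?F \<xi> Y Z = ?F \<xi> (h Y) (h Z) + \<eta> Z * ?F \<xi> (h Y) \<xi> + \<eta> Y * ?F \<xi> \<xi> (h Z)"
    using FY[of \<xi> Y Z] FZ[of \<xi> "h Y" Z] FZ[of \<xi> \<xi> Z] Fxixi[of \<xi>] by simp
  have 6: "?F \<xi> (h Y) \<xi> = - ?F \<xi> \<xi> (h Y)" using Fskew[of \<xi> Y] by simp
  show "p1 \<eta> \<xi> ?F X Y Z + p2 \<eta> \<xi> ?F X Y Z + p3 \<eta> \<xi> ?F X Y Z + p4 \<eta> \<xi> ?F X Y Z = ?F X Y Z"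
    unfolding p1_def p2_def p3_def p4_def using 1 2 3 4 5 6 by (simp add: algebra_simps)
qed

lemma C1: assumes L: "linear L"
  shows "(\<lambda>X Y Z. FF A A\<xi> (L X) (h Y) (h Z)) \<in> Fspace \<phi> \<xi> \<eta> g"
proof -
  have La: "L (x + y) = L x + L y" "L (c *\<^sub>R x) = c *\<^sub>R L x" for x y c
    using linear_add[OF L] linear_cmul[OF L] by auto
  define A' where "A' u X = h (A u (L X))" for u X
  define Ax' :: "'v \<Rightarrow> 'v" where "Ax' X = 0" for X
  have "wit A' Ax'"
    unfolding wit_def
  proof (intro conjI allI ballI)
    show "linear (A' u)" for u by (rule linearI) (simp_all add: A'_def La)
    show "linear (\<lambda>u. A' u X)" for X by (rule linearI) (simp_all add: A'_def)
    show "linear Ax'" by (rule linearI) (simp_all add: Ax'_def)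
    show "g (A' u X) w = - g (A' w X) u" if "u \<in> distD \<eta>" "w \<in> distD \<eta>" for X u w
      using that Wskew[OF that, of "L X"] unfolding distD_def by (simp add: A'_def h_eq)
    show "A' (\<phi> u) X = - \<phi> (A' u X) - g (Ax' X) u *\<^sub>R \<xi>" if "u \<in> distD \<eta>" for X u
      using Wphi[OF that, of "L X"] by (simp add: A'_def Ax'_def h_eq)
    show "\<eta> (A' u X) = - g (Ax' X) (\<phi> u)" for X u by (simp add: A'_def Ax'_def)
    show "\<eta> (Ax' X) = 0" for X by (simp add: Ax'_def)
  qed
  moreover have "(\<lambda>X Y Z. FF A A\<xi> (L X) (h Y) (h Z)) = FF A' Ax'"
    by (intro ext) (simp add: FF_def A'_def Ax'_def h_eq algebra_simps)
  ultimately show ?thesis unfolding Fspace_iff by blast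
qed

lemma C2: assumes L: "linear L"
  shows "(\<lambda>X Y Z. - \<eta> Y * FF A A\<xi> (L X) (h Z) \<xi> + \<eta> Z * FF A A\<xi> (L X) (h Y) \<xi>) \<in> Fspace \<phi> \<xi> \<eta> g"
proof -
  have La: "L (x + y) = L x + L y" "L (c *\<^sub>R x) = c *\<^sub>R L x" for x y c
    using linear_add[OF L] linear_cmul[OF L] by auto
  define A' where "A' u X = (- g (A\<xi> (L X)) (\<phi> u)) *\<^sub>R \<xi>" for u X
  define Ax' :: "'v \<Rightarrow> 'v" where "Ax' X = A\<xi> (L X)" for X
  have "wit A' Ax'"
    unfolding wit_def
  proof (intro conjI allI ballI)
    show "linear (A' u)" for u by (rule linearI) (simp_all add: A'_def La algebra_simps)
    show "linear (\<lambda>u. A' u X)" for X by (rule linearI) (simp_all add: A'_def algebra_simps)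
    show "linear Ax'" by (rule linearI) (simp_all add: Ax'_def La)
    show "g (A' u X) w = - g (A' w X) u" if "u \<in> distD \<eta>" "w \<in> distD \<eta>" for X u w
      using that unfolding distD_def by (simp add: A'_def)
    show "A' (\<phi> u) X = - \<phi> (A' u X) - g (Ax' X) u *\<^sub>R \<xi>" if "u \<in> distD \<eta>" for X u
      using that unfolding distD_def by (simp add: A'_def Ax'_def)
    show "\<eta> (A' u X) = - g (Ax' X) (\<phi> u)" for X u by (simp add: A'_def Ax'_def)
    show "\<eta> (Ax' X) = 0" for X by (simp add: Ax'_def)
  qed
  moreover have "(\<lambda>X Y Z. - \<eta> Y * FF A A\<xi> (L X) (h Z) \<xi> + \<eta> Z * FF A A\<xi> (L X) (h Y) \<xi>) = FF A' Ax'"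
    by (intro ext) (simp add: FF_def A'_def Ax'_def A_eta algebra_simps)
  ultimately show ?thesis unfolding Fspace_iff by blast
qed

end

lemma Fspace_zero: assumes "F \<in> Fspace \<phi> \<xi> \<eta> g"
  shows "F 0 Y Z = 0" "F X 0 Z = 0" "F X Y 0 = 0"
  using assms F0 unfolding Fspace_iff by blast+

lemma idem: assumes FS: "F \<in> Fspace \<phi> \<xi> \<eta> g"
  shows "p1 \<eta> \<xi> (p1 \<eta> \<xi> F) = p1 \<eta> \<xi> F" "p2 \<eta> \<xi> (p2 \<eta> \<xi> F) = p2 \<eta> \<xi> F"
    "p3 \<eta> \<xi> (p3 \<eta> \<xi> F) = p3 \<eta> \<xi> F" "p4 \<eta> \<xi> (p4 \<eta> \<xi> F) = p4 \<eta> \<xi> F"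
    "p1 \<eta> \<xi> (p2 \<eta> \<xi> F) = (\<lambda>X Y Z. 0)" "p1 \<eta> \<xi> (p3 \<eta> \<xi> F) = (\<lambda>X Y Z. 0)"
    "p1 \<eta> \<xi> (p4 \<eta> \<xi> F) = (\<lambda>X Y Z. 0)" "p2 \<eta> \<xi> (p1 \<eta> \<xi> F) = (\<lambda>X Y Z. 0)"
    "p2 \<eta> \<xi> (p3 \<eta> \<xi> F) = (\<lambda>X Y Z. 0)" "p2 \<eta> \<xi> (p4 \<eta> \<xi> F) = (\<lambda>X Y Z. 0)"
    "p3 \<eta> \<xi> (p1 \<eta> \<xi> F) = (\<lambda>X Y Z. 0)" "p3 \<eta> \<xi> (p2 \<eta> \<xi> F) = (\<lambda>X Y Z. 0)"
    "p3 \<eta> \<xi> (p4 \<eta> \<xi> F) = (\<lambda>X Y Z. 0)" "p4 \<eta> \<xi> (p1 \<eta> \<xi> F) = (\<lambda>X Y Z. 0)"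
    "p4 \<eta> \<xi> (p2 \<eta> \<xi> F) = (\<lambda>X Y Z. 0)" "p4 \<eta> \<xi> (p3 \<eta> \<xi> F) = (\<lambda>X Y Z. 0)"
  by (simp_all add: fun_eq_iff p1_def p2_def p3_def p4_def Fspace_zero[OF FS])

lemma equiv: assumes a: "a \<in> struct_group \<phi> \<xi> \<eta> g"
  shows "p1 \<eta> \<xi> (lam a F) = lam a (p1 \<eta> \<xi> F)" "p2 \<eta> \<xi> (lam a F) = lam a (p2 \<eta> \<xi> F)"
    "p3 \<eta> \<xi> (lam a F) = lam a (p3 \<eta> \<xi> F)" "p4 \<eta> \<xi> (lam a F) = lam a (p4 \<eta> \<xi> F)"
proof -
  have la: "linear a" and b: "bij a" and ax: "a \<xi> = \<xi>" and ea: "\<eta> \<circ> a = \<eta>"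
    using a unfolding struct_group_def by auto
  have inj: "inj a" using b bij_is_inj by blast
  have aia: "a (inv a X) = X" for X using b by (simp add: bij_is_surj surj_f_inv_f)
  have iax: "inv a \<xi> = \<xi>" using ax inj by (metis inv_f_f)
  have eia[simp]: "\<eta> (inv a X) = \<eta> X" for X using ea aia by (metis comp_apply)
  have iah[simp]: "inv a (h X) = h (inv a X)" for X
  proof -
    have "a (h (inv a X)) = h X"
      using linear_diff[OF la] linear_cmul[OF la] by (simp add: h_eq aia ax)
    then show ?thesis using inj by (metis inv_f_f)
  qed
  show "p1 \<eta> \<xi> (lam a F) = lam a (p1 \<eta> \<xi> F)" "p2 \<eta> \<xi> (lam a F) = lam a (p2 \<eta> \<xi> F)"
    "p3 \<eta> \<xi> (lam a F) = lam a (p3 \<eta> \<xi> F)" "p4 \<eta> \<xi> (lam a F) = lam a (p4 \<eta> \<xi> F)"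
    by (simp_all add: fun_eq_iff p1_def p2_def p3_def p4_def lam_def iax)
qed

lemma closure: assumes F: "F \<in> Fspace \<phi> \<xi> \<eta> g"
  shows "p1 \<eta> \<xi> F \<in> Fspace \<phi> \<xi> \<eta> g" "p2 \<eta> \<xi> F \<in> Fspace \<phi> \<xi> \<eta> g"
    "p3 \<eta> \<xi> F \<in> Fspace \<phi> \<xi> \<eta> g" "p4 \<eta> \<xi> F \<in> Fspace \<phi> \<xi> \<eta> g"
proof -
  obtain A A\<xi> where W: "wit A A\<xi>" and Fe: "F = FF A A\<xi>" using F unfolding Fspace_iff by blast
  have lk: "linear (\<lambda>X. \<eta> X *\<^sub>R \<xi>)" by (rule linearI) (simp_all add: algebra_simps)
  show "p1 \<eta> \<xi> F \<in> Fspace \<phi> \<xi> \<eta> g"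
    using C1[OF W lin_h] unfolding Fe p1_def by simp
  show "p2 \<eta> \<xi> F \<in> Fspace \<phi> \<xi> \<eta> g"
    using C2[OF W lin_h] unfolding Fe p2_def by simp
  have "p3 \<eta> \<xi> F = (\<lambda>X Y Z. FF A A\<xi> (\<eta> X *\<^sub>R \<xi>) (h Y) (h Z))"
    unfolding Fe p3_def by (simp add: Fscale1[OF W])
  then show "p3 \<eta> \<xi> F \<in> Fspace \<phi> \<xi> \<eta> g" using C1[OF W lk] by simp
  have "p4 \<eta> \<xi> F = (\<lambda>X Y Z. - \<eta> Y * FF A A\<xi> (\<eta> X *\<^sub>R \<xi>) (h Z) \<xi> + \<eta> Z * FF A A\<xi> (\<eta> X *\<^sub>R \<xi>) (h Y) \<xi>)"
    unfolding Fe p4_def by (simp add: fun_eq_iff Fscale1[OF W] Fskew[OF W] algebra_simps)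
  then show "p4 \<eta> \<xi> F \<in> Fspace \<phi> \<xi> \<eta> g" using C2[OF W lk] by simp
qed

lemma sum_all: assumes F: "F \<in> Fspace \<phi> \<xi> \<eta> g"
  shows "(\<lambda>X Y Z. p1 \<eta> \<xi> F X Y Z + p2 \<eta> \<xi> F X Y Z + p3 \<eta> \<xi> F X Y Z + p4 \<eta> \<xi> F X Y Z) = F"
  using F sumF unfolding Fspace_iff by blast

end

theorem lemma2p1:
  fixes n :: nat and \<phi> :: "'v::euclidean_space \<Rightarrow> 'v" and \<xi> :: 'v
    and \<eta> :: "'v \<Rightarrow> real" and g :: "'v \<Rightarrow> 'v \<Rightarrow> real"
  assumes "apn_structure n \<phi> \<xi> \<eta> g"
  shows "(\<forall>i\<in>{1..4}. \<forall>F\<in>Fspace \<phi> \<xi> \<eta> g. projs \<eta> \<xi> i F \<in> Fspace \<phi> \<xi> \<eta> g)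
    \<and> (\<forall>i\<in>{1..4}. \<forall>F\<in>Fspace \<phi> \<xi> \<eta> g. projs \<eta> \<xi> i (projs \<eta> \<xi> i F) = projs \<eta> \<xi> i F)
    \<and> (\<forall>F\<in>Fspace \<phi> \<xi> \<eta> g. (\<lambda>X Y Z. p1 \<eta> \<xi> F X Y Z + p2 \<eta> \<xi> F X Y Z + p3 \<eta> \<xi> F X Y Z
                                          + p4 \<eta> \<xi> F X Y Z) = F)
    \<and> (\<forall>i\<in>{1..4}. \<forall>j\<in>{1..4}. i \<noteq> j \<longrightarrow>
         (\<forall>F\<in>Fspace \<phi> \<xi> \<eta> g. projs \<eta> \<xi> i (projs \<eta> \<xi> j F) = (\<lambda>X Y Z. 0)))
    \<and> (\<forall>i\<in>{1..4}. \<forall>a\<in>struct_group \<phi> \<xi> \<eta> g. \<forall>F\<in>Fspace \<phi> \<xi> \<eta> g.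
         projs \<eta> \<xi> i (lam a F) = lam a (projs \<eta> \<xi> i F))"
proof -
  interpret apn n \<phi> \<xi> \<eta> g by unfold_locales (rule assms)
  have I: "i \<in> {1..4} \<Longrightarrow> i = 1 \<or> i = 2 \<or> i = 3 \<or> i = (4::nat)" for i by auto
  show ?thesis
  proof (intro conjI ballI impI)
    fix i F assume "i \<in> {1..4::nat}" "F \<in> Fspace \<phi> \<xi> \<eta> g"
    then show "projs \<eta> \<xi> i F \<in> Fspace \<phi> \<xi> \<eta> g"
      using I closure unfolding projs_def by auto
  next
    fix i F assume "i \<in> {1..4::nat}" "F \<in> Fspace \<phi> \<xi> \<eta> g"
    then show "projs \<eta> \<xi> i (projs \<eta> \<xi> i F) = projs \<eta> \<xi> i F"
      using I[of i] idem unfolding projs_def by auto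
  next
    fix F assume "F \<in> Fspace \<phi> \<xi> \<eta> g"
    then show "(\<lambda>X Y Z. p1 \<eta> \<xi> F X Y Z + p2 \<eta> \<xi> F X Y Z + p3 \<eta> \<xi> F X Y Z + p4 \<eta> \<xi> F X Y Z) = F"
      by (rule sum_all)
  next
    fix i j F assume "i \<in> {1..4::nat}" "j \<in> {1..4::nat}" "i \<noteq> j" "F \<in> Fspace \<phi> \<xi> \<eta> g"
    then show "projs \<eta> \<xi> i (projs \<eta> \<xi> j F) = (\<lambda>X Y Z. 0)"
      using I[of i] I[of j] idem unfolding projs_def by auto
  next
    fix i a F assume "i \<in> {1..4::nat}" "a \<in> struct_group \<phi> \<xi> \<eta> g" "F \<in> Fspace \<phi> \<xi> \<eta> g"
    then show "projs \<eta> \<xi> i (lam a F) = lam a (projs \<eta> \<xi> i F)"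
      using I[of i] equiv unfolding projs_def by auto
  qed
qed

end
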